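(* Let $\mathcal{D}\subset\mathbb{R}^d$, let $k$ be a positive definite kernel on $\mathcal{D}\times\mathcal{D}$, and let $\epsilon\ge 0$. Let $f^*:\mathcal{D}\to\mathbb{R}$ and let $\tilde f:\mathcal{D}\to\mathbb{R}$ satisfy $|\tilde f(x)-f^*(x)|\le\epsilon$ for all $x\in\mathcal{D}$; write $m(x)=f^*(x)-\tilde f(x)$, so $m:\mathcal{D}\to[-\epsilon,\epsilon]$. Let $x_1,\dots,x_t\in\mathcal{D}$ ($t\ge1$) be any points and $\eta_1,\dots,\eta_t$ any real noise values; set $y^*_i=f^*(x_i)+\eta_i$ and $y_i=y^*_i-m(x_i)=\tilde f(x_i)+\eta_i$. For $\lambda>0$ define $$\mu_t(x)=k_t(x)^T(K_t+\lambda I_t)^{-1}Y_t,\qquad \mu^*_t(x)=k_t(x)^T(K_t+\lambda I_t)^{-1}Y^*_t,$$ $$\sigma_t^2(x)=k(x,x)-k_t(x)^T(K_t+\lambda I_t)^{-1}k_t(x),$$ where $k_t(x)=[k(x_1,x),\dots,k(x_t,x)]^T$, $K_t=[k(x_s,x_{s'})]_{s,s'\le t}$, $Y_t=[y_1,\dots,y_t]^T$, $Y^*_t=[y^*_1,\dots,y^*_t]^T$. Then for every $x\in\mathcal{D}$, $$|\mu_t(x)-\mu^*_t(x)|\le \frac{\epsilon\sqrt{t}}{\sqrt{\lambda}}\,\sigma_t(x).$$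
   Context: $\mu_t,\sigma_t^2$ are the Gaussian-process posterior mean and variance (kernel ridge regression estimates) with regularization/noise parameter $\lambda$; $\mu^*_t$ is the same mean estimator computed from observations of $f^*$ rather than of $\tilde f$. *)

theory Defs
  imports "HOL-Analysis.Analysis"
begin

definition pd_kernel :: "'a set \<Rightarrow> ('a \<Rightarrow> 'a \<Rightarrow> real) \<Rightarrow> bool" where
  "pd_kernel D k \<longleftrightarrow>
     (\<forall>x\<in>D. \<forall>y\<in>D. k x y = k y x) \<and>
     (\<forall>(n::nat) (xs::nat \<Rightarrow> 'a) (c::nat \<Rightarrow> real). (\<forall>i<n. xs i \<in> D) \<longrightarrow>
        0 \<le> (\<Sum>i<n. \<Sum>j<n. c i * c j * k (xs i) (xs j)))"

text \<open>Kernel vector k_t(x), Gram matrix K_t, indexed by the finite type 't of observations.\<close>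
definition kvec :: "('a \<Rightarrow> 'a \<Rightarrow> real) \<Rightarrow> ('t::finite \<Rightarrow> 'a) \<Rightarrow> 'a \<Rightarrow> real^'t" where
  "kvec k X x = (\<chi> s. k (X s) x)"

definition gram :: "('a \<Rightarrow> 'a \<Rightarrow> real) \<Rightarrow> ('t::finite \<Rightarrow> 'a) \<Rightarrow> real^'t^'t" where
  "gram k X = (\<chi> s s'. k (X s) (X s'))"

definition gp_mean :: "('a \<Rightarrow> 'a \<Rightarrow> real) \<Rightarrow> ('t::finite \<Rightarrow> 'a) \<Rightarrow> real \<Rightarrow> real^'t \<Rightarrow> 'a \<Rightarrow> real" where
  "gp_mean k X lam Y x = kvec k X x \<bullet> (matrix_inv (gram k X + mat lam) *v Y)"

definition gp_var :: "('a \<Rightarrow> 'a \<Rightarrow> real) \<Rightarrow> ('t::finite \<Rightarrow> 'a) \<Rightarrow> real \<Rightarrow> 'a \<Rightarrow> real" where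
  "gp_var k X lam x = k x x - kvec k X x \<bullet> (matrix_inv (gram k X + mat lam) *v kvec k X x)"

end

theory Submission
  imports Defs
begin

lemma quad_ext:
  fixes X :: "'t::finite \<Rightarrow> 'a"
  assumes pd: "pd_kernel D k" and XD: "\<forall>s. X s \<in> D" and xD: "x \<in> D"
  shows "0 \<le> (\<Sum>s\<in>UNIV. \<Sum>s'\<in>UNIV. c s * c s' * k (X s) (X s'))
             + 2 * a * (\<Sum>s\<in>UNIV. c s * k (X s) x) + a^2 * k x x"
proof -
  define n where "n = CARD('t)"
  obtain h where h: "bij_betw h {..<n} (UNIV::'t set)"
    using ex_bij_betw_nat_finite[of "UNIV::'t set"] unfolding n_def atLeast0LessThan by auto
  define xs where "xs i = (if i < n then X (h i) else x)" for i
  define cc where "cc i = (if i < n then c (h i) else a)" for i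
  have "\<forall>i<Suc n. xs i \<in> D" using XD xD by (auto simp: xs_def)
  hence P: "0 \<le> (\<Sum>i<Suc n. \<Sum>j<Suc n. cc i * cc j * k (xs i) (xs j))"
    using pd unfolding pd_kernel_def by blast
  have sym: "k x (X s) = k (X s) x" for s using pd XD xD unfolding pd_kernel_def by blast
  have R: "(\<Sum>i<n. g (h i)) = (\<Sum>s\<in>UNIV. g s)" for g :: "'t \<Rightarrow> real"
    using sum.reindex_bij_betw[OF h, of g] by simp
  have "(\<Sum>i<Suc n. \<Sum>j<Suc n. cc i * cc j * k (xs i) (xs j))
      = (\<Sum>i<n. (\<Sum>j<n. c (h i) * c (h j) * k (X (h i)) (X (h j))) + c (h i) * a * k (X (h i)) x)
        + ((\<Sum>j<n. a * c (h j) * k x (X (h j))) + a * a * k x x)"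
    by (simp add: cc_def xs_def)
  also have "\<dots> = (\<Sum>s\<in>UNIV. \<Sum>s'\<in>UNIV. c s * c s' * k (X s) (X s'))
             + 2 * a * (\<Sum>s\<in>UNIV. c s * k (X s) x) + a^2 * k x x"
  proof -
    have e1: "(\<Sum>i<n. (\<Sum>j<n. c (h i) * c (h j) * k (X (h i)) (X (h j))) + c (h i) * a * k (X (h i)) x)
       = (\<Sum>s\<in>UNIV. \<Sum>s'\<in>UNIV. c s * c s' * k (X s) (X s')) + (\<Sum>s\<in>UNIV. c s * a * k (X s) x)"
      by (simp add: sum.distrib R[of "\<lambda>s. (\<Sum>j<n. c s * c (h j) * k (X s) (X (h j)))"]
           R[of "\<lambda>s'. c _ * c s' * k (X _) (X s')"] R[of "\<lambda>s. c s * a * k (X s) x"]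
           R[of "\<lambda>s. \<Sum>s'\<in>UNIV. c s * c s' * k (X s) (X s')"])
    have e2: "(\<Sum>j<n. a * c (h j) * k x (X (h j))) = (\<Sum>s\<in>UNIV. c s * a * k (X s) x)"
      using R[of "\<lambda>s. c s * a * k (X s) x"] by (simp add: sym mult.commute)
    have e3: "(\<Sum>s\<in>UNIV. c s * a * k (X s) x) = a * (\<Sum>s\<in>UNIV. c s * k (X s) x)"
      by (simp add: sum_distrib_left mult_ac)
    show ?thesis unfolding e1 e2 e3 by (simp add: power2_eq_square)
  qed
  finally show ?thesis using P by simp
qed

lemma sym_inner:
  fixes A :: "real^'n^'n"
  assumes "\<And>i j. A$i$j = A$j$i"
  shows "inner (A *v v) w = inner v (A *v w)"
proof -
  have "inner (A *v v) w = (\<Sum>i\<in>UNIV. \<Sum>j\<in>UNIV. A$i$j * v$j * w$i)"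
    by (simp add: inner_vec_def matrix_vector_mult_def sum_distrib_right sum_distrib_left mult_ac)
  also have "\<dots> = (\<Sum>j\<in>UNIV. \<Sum>i\<in>UNIV. A$i$j * v$j * w$i)" by (rule sum.swap)
  also have "\<dots> = inner v (A *v w)"
    by (simp add: inner_vec_def matrix_vector_mult_def sum_distrib_left mult_ac assms)
  finally show ?thesis .
qed

lemma qform_gram:
  fixes X :: "'t::finite \<Rightarrow> 'a"
  shows "inner z (gram k X *v z) = (\<Sum>s\<in>UNIV. \<Sum>s'\<in>UNIV. z$s * z$s' * k (X s) (X s'))"
  by (simp add: inner_vec_def matrix_vector_mult_def gram_def sum_distrib_left mult_ac)

lemma kvec_inner:
  fixes X :: "'t::finite \<Rightarrow> 'a"
  shows "inner (kvec k X x) z = (\<Sum>s\<in>UNIV. z$s * k (X s) x)"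
  by (simp add: inner_vec_def kvec_def mult_ac)

lemma mat_mult_vec: "(mat (lam::real) :: real^'n^'n) *v z = lam *\<^sub>R z"
proof -
  have "(\<Sum>j\<in>UNIV. (mat lam :: real^'n^'n)$i$j * z$j) = (\<Sum>j\<in>UNIV. if i = j then lam * z$j else 0)" for i
    by (rule sum.cong) (auto simp: mat_def)
  thus ?thesis by (simp add: vec_eq_iff matrix_vector_mult_def)
qed

theorem lemma2:
  fixes D :: "(real^'d) set"
    and k :: "real^'d \<Rightarrow> real^'d \<Rightarrow> real"
    and fstar ftilde :: "real^'d \<Rightarrow> real"
    and X :: "'t::finite \<Rightarrow> real^'d"
    and eta :: "'t \<Rightarrow> real"
    and eps lam :: real
    and x :: "real^'d"
  assumes "pd_kernel D k"
    and "eps \<ge> 0"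
    and "\<forall>z\<in>D. \<bar>ftilde z - fstar z\<bar> \<le> eps"
    and "\<forall>s. X s \<in> D"
    and "lam > 0"
    and "x \<in> D"
  shows "\<bar>gp_mean k X lam (\<chi> s. ftilde (X s) + eta s) x
           - gp_mean k X lam (\<chi> s. fstar (X s) + eta s) x\<bar>
         \<le> eps * sqrt (real CARD('t)) / sqrt lam * sqrt (gp_var k X lam x)"
proof -
  note pd = assms(1) and XD = assms(4) and xD = assms(6) and lam = assms(5)
  define K where "K = gram k X"
  define A where "A = K + mat lam"
  define kx where "kx = kvec k X x"
  have Amul: "A *v z = K *v z + lam *\<^sub>R z" for z
    by (simp add: A_def matrix_vector_mult_add_rdistrib mat_mult_vec)
  have ksym: "\<forall>a\<in>D. \<forall>b\<in>D. k a b = k b a" using pd unfolding pd_kernel_def by blast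
  have Asym: "A$i$j = A$j$i" for i j
    using ksym XD by (simp add: A_def K_def gram_def mat_def)
  have Q0: "0 \<le> inner z (K *v z)" for z
    using quad_ext[OF pd XD xD, of "\<lambda>s. z$s" 0] by (simp add: K_def qform_gram)
  have inj: "\<forall>z. A *v z = 0 \<longrightarrow> z = 0"
  proof (intro allI impI)
    fix z assume "A *v z = 0"
    hence "0 = inner z (A *v z)" by simp
    also have "\<dots> = inner z (K *v z) + lam * inner z z" by (simp add: Amul inner_add_right)
    finally have "lam * inner z z \<le> 0" using Q0[of z] by linarith
    hence "inner z z \<le> 0" using lam by (simp add: mult_le_0_iff)
    thus "z = 0" by (metis inner_eq_zero_iff inner_ge_zero antisym)
  qed
  then obtain B where "B ** A = mat 1" using matrix_left_invertible_ker by blast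
  hence "A ** B = mat 1 \<and> B ** A = mat 1" using matrix_left_right_inverse by blast
  hence Ai: "A ** matrix_inv A = mat 1 \<and> matrix_inv A ** A = mat 1"
    unfolding matrix_inv_def by (rule someI)
  define Ai where "Ai = matrix_inv A"
  define v where "v = Ai *v kx"
  have Av: "A *v v = kx" using Ai by (simp add: v_def Ai_def matrix_vector_mul_assoc)
  define m :: "real^'t" where "m = (\<chi> s. ftilde (X s) - fstar (X s))"
  have diff: "gp_mean k X lam (\<chi> s. ftilde (X s) + eta s) x
           - gp_mean k X lam (\<chi> s. fstar (X s) + eta s) x = inner kx (Ai *v m)"
  proof -
    have "(\<chi> s. ftilde (X s) + eta s) - (\<chi> s. fstar (X s) + eta s) = m"
      by (simp add: m_def vec_eq_iff)
    hence "Ai *v (\<chi> s. ftilde (X s) + eta s) - Ai *v (\<chi> s. fstar (X s) + eta s) = Ai *v m"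
      by (metis matrix_vector_mult_diff_distrib)
    thus ?thesis unfolding gp_mean_def kx_def[symmetric] Ai_def[symmetric] A_def[symmetric] K_def[symmetric]
      by (metis inner_diff_right)
  qed
  have vm: "inner kx (Ai *v m) = inner v m"
  proof -
    have "inner kx (Ai *v m) = inner (A *v v) (Ai *v m)" by (simp add: Av)
    also have "\<dots> = inner v (A *v (Ai *v m))" by (rule sym_inner[OF Asym])
    also have "\<dots> = inner v m" using Ai by (simp add: Ai_def matrix_vector_mul_assoc)
    finally show ?thesis .
  qed
  have var: "gp_var k X lam x = k x x - inner kx v"
    by (simp add: gp_var_def kx_def v_def Ai_def A_def K_def)
  have key: "lam * inner v v \<le> gp_var k X lam x"
  proof -
    have q: "0 \<le> inner v (K *v v) - 2 * inner kx v + k x x"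
      using quad_ext[OF pd XD xD, of "\<lambda>s. - v$s" 1]
      by (simp add: K_def qform_gram kvec_inner kx_def sum_negf)
    have "inner v (K *v v) = inner v kx - lam * inner v v"
    proof -
      have "K *v v = kx - lam *\<^sub>R v" using Av Amul[of v] by (simp add: algebra_simps)
      thus ?thesis by (simp add: inner_diff_right inner_commute)
    qed
    thus ?thesis using q var by (simp add: inner_commute)
  qed
  have nv: "norm v \<le> sqrt (gp_var k X lam x) / sqrt lam"
  proof -
    have "inner v v \<le> gp_var k X lam x / lam" using key lam by (simp add: field_simps)
    hence "sqrt (inner v v) \<le> sqrt (gp_var k X lam x / lam)" by (rule real_sqrt_le_mono)
    thus ?thesis by (simp add: norm_eq_sqrt_inner real_sqrt_divide)
  qed
  have nm: "norm m \<le> eps * sqrt (real CARD('t))"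
  proof -
    have "\<bar>m$s\<bar> \<le> eps" for s using assms(3) XD by (simp add: m_def)
    hence "(m$s)^2 \<le> eps^2" for s
      using abs_le_square_iff[of "m$s" eps] assms(2) by simp
    hence "inner m m \<le> (\<Sum>s\<in>(UNIV::'t set). eps^2)"
      unfolding inner_vec_def by (intro sum_mono) (simp add: power2_eq_square)
    hence "inner m m \<le> real CARD('t) * eps^2" by simp
    hence "sqrt (inner m m) \<le> sqrt (real CARD('t) * eps^2)" by (rule real_sqrt_le_mono)
    thus ?thesis using assms(2) by (simp add: norm_eq_sqrt_inner real_sqrt_mult mult.commute)
  qed
  have "\<bar>inner v m\<bar> \<le> norm v * norm m" by (rule Cauchy_Schwarz_ineq2)
  also have "\<dots> \<le> (sqrt (gp_var k X lam x) / sqrt lam) * (eps * sqrt (real CARD('t)))"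
  proof -
    have "0 \<le> lam * inner v v" using lam by simp
    hence g: "0 \<le> gp_var k X lam x" using key by linarith
    have "0 \<le> sqrt (gp_var k X lam x) / sqrt lam" using g lam by simp
    thus ?thesis by (intro mult_mono nv nm) auto
  qed
  finally show ?thesis unfolding diff vm by (simp add: field_simps)
qed

end
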